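(* Consider a repeated $N$-player game with profit parameter $r>1$ in which, in each round, each player chooses cooperation ($c$) or defection ($d$); if $b$ players cooperate in a round, each cooperator receives $\frac{rb}{N}$ and each defector receives $\frac{rb}{N}+1$. Let a ZD alliance $\mathcal{A}$ consist of $n^{\mathcal{A}}$ players that always take the same action, and let the remaining $N-n^{\mathcal{A}}$ players be the outsiders. Suppose the alliance uses a zero-determinant strategy enforcing the linear relation $\pi^{-\mathcal{A}}=\chi\,\pi^{\mathcal{A}}+(1-\chi)\,l$ with $\chi=0$, where $\pi^{\mathcal{A}}$ and $\pi^{-\mathcal{A}}$ are the expected (stationary) per-member utilities of the alliance and of the outsiders. If $\frac{r-1}{2r}N<n^{\mathcal{A}}\le\frac{r-1}{r}N$, then the expected utility of the outsiders satisfies $$\frac{r\,(N-n^{\mathcal{A}})}{N}\le \pi^{-\mathcal{A}}\le \frac{r\,n^{\mathcal{A}}}{N}+1 .$$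
   Context: Per-outcome average payoffs: when the alliance plays $s\in\{c,d\}$ and there are $b$ cooperators in total, an alliance member gets $g^{\mathcal{A}}_{c,b}=\frac{rb}{N}$ ($n^{\mathcal{A}}\le b\le N$) or $g^{\mathcal{A}}_{d,b}=\frac{rb}{N}+1$ ($0\le b\le N-n^{\mathcal{A}}$), and the average outsider payoff is $g^{-\mathcal{A}}_{c,b}=\frac{(b-n^{\mathcal{A}})\frac{rb}{N}+(N-b)(\frac{rb}{N}+1)}{N-n^{\mathcal{A}}}$ ($n^{\mathcal{A}}\le b\le N$) or $g^{-\mathcal{A}}_{d,b}=\frac{b\frac{rb}{N}+(N-n^{\mathcal{A}}-b)(\frac{rb}{N}+1)}{N-n^{\mathcal{A}}}$ ($0\le b\le N-n^{\mathcal{A}}$). The game is sequential: the alliance members are among the first movers (leaders), whose cooperation probabilities depend on the previous round's outcome, while followers condition on the leaders' current moves. A zero-determinant strategy of the alliance is a strategy vector proportional to $\chi(\mathbf{g}^{\mathcal{A}}-l\mathbf{1})-(\mathbf{g}^{-\mathcal{A}}-l\mathbf{1})$, which forces $\pi^{-\mathcal{A}}=\chi\pi^{\mathcal{A}}+(1-\chi)l$ for the stationary distribution of the induced Markov chain; with $\chi=0$ this sets $\pi^{-\mathcal{A}}=l$. *)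

theory Defs
  imports Complex_Main
begin

text \<open>Outcome states of a round: (s, b) where s = True means the alliance plays c,
  s = False means it plays d, and b is the total number of cooperators.\<close>

definition outcomes :: "nat \<Rightarrow> nat \<Rightarrow> (bool \<times> nat) set" where
  "outcomes N nA = {(True, b) | b. nA \<le> b \<and> b \<le> N} \<union> {(False, b) | b. b \<le> N - nA}"

definition gA :: "real \<Rightarrow> nat \<Rightarrow> nat \<Rightarrow> bool \<times> nat \<Rightarrow> real" where
  "gA r N nA sb = (case sb of (s, b) \<Rightarrow>
      if s then r * real b / real N else r * real b / real N + 1)"

definition gO :: "real \<Rightarrow> nat \<Rightarrow> nat \<Rightarrow> bool \<times> nat \<Rightarrow> real" where
  "gO r N nA sb = (case sb of (s, b) \<Rightarrow>
      if s then ((real b - real nA) * (r * real b / real N)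
                 + (real N - real b) * (r * real b / real N + 1)) / (real N - real nA)
      else (real b * (r * real b / real N)
                 + (real N - real nA - real b) * (r * real b / real N + 1)) / (real N - real nA))"

text \<open>The alliance's (memory-one, leader) strategy p gives the cooperation probability
  in the next round after each outcome. It is a zero-determinant strategy enforcing
  pi^{-A} = chi pi^A + (1 - chi) l if the vector p~ (p~(c,b) = p(c,b) - 1,
  p~(d,b) = p(d,b)) is a nonzero multiple of chi (g^A - l 1) - (g^{-A} - l 1).\<close>
definition zd_strategy ::
  "real \<Rightarrow> nat \<Rightarrow> nat \<Rightarrow> real \<Rightarrow> real \<Rightarrow> (bool \<times> nat \<Rightarrow> real) \<Rightarrow> bool" where
  "zd_strategy r N nA chi l p \<longleftrightarrow>
     (\<forall>x\<in>outcomes N nA. 0 \<le> p x \<and> p x \<le> 1) \<and>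
     (\<exists>\<phi>. \<phi> \<noteq> 0 \<and> (\<forall>x\<in>outcomes N nA.
        p x - (if fst x then 1 else 0)
          = \<phi> * (chi * (gA r N nA x - l) - (gO r N nA x - l))))"

text \<open>v is a stationary distribution (over outcomes) of a Markov chain in which the
  alliance (a leader) cooperates with probability p(previous outcome). Stationarity
  implies that the probability the alliance cooperates in the current round equals
  the probability it cooperates in the next round.\<close>
definition stationary_for_alliance ::
  "nat \<Rightarrow> nat \<Rightarrow> (bool \<times> nat \<Rightarrow> real) \<Rightarrow> (bool \<times> nat \<Rightarrow> real) \<Rightarrow> bool" where
  "stationary_for_alliance N nA p v \<longleftrightarrow>
     (\<forall>x\<in>outcomes N nA. 0 \<le> v x) \<and>
     (\<Sum>x\<in>outcomes N nA. v x) = 1 \<and>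
     (\<Sum>x\<in>outcomes N nA. v x * p x) = (\<Sum>x\<in>outcomes N nA. if fst x then v x else 0)"

definition pi_alliance :: "real \<Rightarrow> nat \<Rightarrow> nat \<Rightarrow> (bool \<times> nat \<Rightarrow> real) \<Rightarrow> real" where
  "pi_alliance r N nA v = (\<Sum>x\<in>outcomes N nA. v x * gA r N nA x)"

definition pi_outsiders :: "real \<Rightarrow> nat \<Rightarrow> nat \<Rightarrow> (bool \<times> nat \<Rightarrow> real) \<Rightarrow> real" where
  "pi_outsiders r N nA v = (\<Sum>x\<in>outcomes N nA. v x * gO r N nA x)"

end

theory Submission
  imports Defs
begin

theorem theorem2:
  fixes r l :: real and N nA :: nat
    and p v :: "bool \<times> nat \<Rightarrow> real"
  assumes "r > 1"
    and "(r - 1) / (2 * r) * real N < real nA"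
    and "real nA \<le> (r - 1) / r * real N"
    and "zd_strategy r N nA 0 l p"
    and "stationary_for_alliance N nA p v"
  shows "r * (real N - real nA) / real N \<le> pi_outsiders r N nA v
       \<and> pi_outsiders r N nA v \<le> r * real nA / real N + 1"
proof -
  let ?O = "outcomes N nA"
  have r0: "r > 0" using assms(1) by simp
  have Npos: "real N > 0"
  proof (rule ccontr)
    assume "\<not> real N > 0"
    then have "N = 0" by simp
    then show False using assms(2,3) by simp
  qed
  have "(r - 1) / r * real N < real N" using r0 Npos assms(1)
    by (simp add: field_simps)
  then have nAlt: "real nA < real N" using assms(3) by linarith
  then have nAN: "nA < N" by simp
  have D: "real N - real nA > 0" using nAlt by simp
  obtain \<phi> where phi0: "\<phi> \<noteq> 0" and ph: "\<And>x. x \<in> ?O \<Longrightarrow>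
        p x - (if fst x then 1 else 0) = \<phi> * (0 * (gA r N nA x - l) - (gO r N nA x - l))"
    using assms(4) unfolding zd_strategy_def by blast
  have pr: "\<And>x. x \<in> ?O \<Longrightarrow> 0 \<le> p x \<and> p x \<le> 1"
    using assms(4) unfolding zd_strategy_def by blast
  have fin: "finite ?O" unfolding outcomes_def
  proof -
    have "{(True, b) | b. nA \<le> b \<and> b \<le> N} \<subseteq> {True} \<times> {..N}" by auto
    moreover have "{(False, b) | b. b \<le> N - nA} \<subseteq> {False} \<times> {..N}" by auto
    ultimately show "finite ({(True, b) | b. nA \<le> b \<and> b \<le> N} \<union> {(False, b) | b. b \<le> N - nA})"
      by (meson finite_SigmaI finite_Un finite_atMost finite_insert finite.emptyI finite_subset)
  qed
  have st: "(\<Sum>x\<in>?O. v x) = 1" "(\<Sum>x\<in>?O. v x * p x) = (\<Sum>x\<in>?O. if fst x then v x else 0)"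
    using assms(5) unfolding stationary_for_alliance_def by auto
  have "(\<Sum>x\<in>?O. v x * (p x - (if fst x then 1 else 0))) = 0"
  proof -
    have "(\<Sum>x\<in>?O. v x * (p x - (if fst x then 1 else 0)))
        = (\<Sum>x\<in>?O. v x * p x) - (\<Sum>x\<in>?O. if fst x then v x else 0)"
      by (simp add: sum_subtractf[symmetric] algebra_simps if_distrib cong: if_cong)
    then show ?thesis using st by simp
  qed
  moreover have "(\<Sum>x\<in>?O. v x * (p x - (if fst x then 1 else 0)))
      = (\<Sum>x\<in>?O. \<phi> * (l * v x - v x * gO r N nA x))"
    by (rule sum.cong) (auto simp: ph algebra_simps)
  moreover have "(\<Sum>x\<in>?O. \<phi> * (l * v x - v x * gO r N nA x))
      = \<phi> * (l * (\<Sum>x\<in>?O. v x) - pi_outsiders r N nA v)"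
    unfolding pi_outsiders_def
    by (simp add: sum_distrib_left[symmetric] sum_subtractf)
  ultimately have "\<phi> * (l - pi_outsiders r N nA v) = 0" using st by simp
  then have piL: "pi_outsiders r N nA v = l" using phi0 by simp
  have gc: "\<And>b. gO r N nA (True, b) = r * real b / real N + (real N - real b) / (real N - real nA)"
    using D by (simp add: gO_def field_simps)
  have gd: "\<And>b. gO r N nA (False, b) = r * real b / real N + (real N - real nA - real b) / (real N - real nA)"
    using D by (simp add: gO_def field_simps)
  have m1: "(True, nA) \<in> ?O" "(True, N) \<in> ?O" "(False, 0) \<in> ?O" "(False, N - nA) \<in> ?O"
    using nAN unfolding outcomes_def by auto
  have e1: "gO r N nA (True, nA) = r * real nA / real N + 1" using gc D by simp
  have e2: "gO r N nA (True, N) = r" using gc Npos by simp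
  have e3: "gO r N nA (False, 0) = 1" using gd D by simp
  have e4: "gO r N nA (False, N - nA) = r * (real N - real nA) / real N"
    using gd nAN by (simp add: of_nat_diff)
  show ?thesis
  proof (cases "\<phi> > 0")
    case True
    have a: "\<phi> * (l - gO r N nA (True, nA)) \<le> 0" using ph[OF m1(1)] pr[OF m1(1)] by simp
    have b: "\<phi> * (l - gO r N nA (False, N - nA)) \<ge> 0" using ph[OF m1(4)] pr[OF m1(4)] by simp
    have "l \<le> gO r N nA (True, nA)" using a True by (simp add: mult_le_0_iff)
    moreover have "l \<ge> gO r N nA (False, N - nA)" using b True by (simp add: zero_le_mult_iff)
    ultimately show ?thesis using piL e1 e4 by simp
  next
    case False
    then have neg: "\<phi> < 0" using phi0 by simp
    have a: "\<phi> * (l - gO r N nA (True, N)) \<le> 0" using ph[OF m1(2)] pr[OF m1(2)] by simp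
    have b: "\<phi> * (l - gO r N nA (False, 0)) \<ge> 0" using ph[OF m1(3)] pr[OF m1(3)] by simp
    have "l \<ge> gO r N nA (True, N)" using a neg by (simp add: mult_le_0_iff)
    moreover have "l \<le> gO r N nA (False, 0)" using b neg by (simp add: zero_le_mult_iff)
    ultimately show ?thesis using e2 e3 assms(1) by simp
  qed
qed

end
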